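(* Let $\tfrac12<\sigma<1$. Then, as $n\to\infty$, $$\frac{1}{n^{2(1-\sigma)}}\int_0^1\Big|\sum_{k=1}^n\frac{1}{k^{\sigma+it}}\Big|^2dt=\frac{1}{1-\sigma}\arctan\Big(\frac{1}{1-\sigma}\Big)+O_\sigma\Big(\frac{1}{n^{2(1-\sigma)/3}}\Big).$$ *)

theory Defs
  imports "HOL-Analysis.Analysis" "HOL-Library.Landau_Symbols"
begin

definition zeta_partial :: "nat \<Rightarrow> real \<Rightarrow> real \<Rightarrow> complex" where
  "zeta_partial n \<sigma> t = (\<Sum>k=1..n. of_nat k powr (- Complex \<sigma> t))"

end

theory Submission
  imports Defs
begin

lemma taylor_step:
  fixes a :: real and s :: complex
  assumes a: "a > 0" and s1: "s \<noteq> 1" and sr: "Re s \<ge> 0"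
  shows "cmod ((of_real (a+1)) powr (1-s) / (1-s) - (of_real a) powr (1-s) / (1-s) - (of_real a) powr (-s))
         \<le> cmod s * a powr (- Re s - 1)"
proof -
  define S where "S = complex_of_real ` {a..a+1}"
  have cS: "convex S" unfolding S_def
    by (intro convex_linear_image convex_real_interval) (auto intro: bounded_linear.linear bounded_linear_of_real)
  have Spos: "x \<notin> \<real>\<^sub>\<le>\<^sub>0" if xS: "x \<in> S" for x
    using that a by (auto simp: S_def nonpos_Reals_def)
  define f where "f = (\<lambda>i::nat. if i = 0 then (\<lambda>z::complex. z powr (1-s) / (1-s))
        else if i = 1 then (\<lambda>z. z powr (-s)) else (\<lambda>z. -s * z powr (-s-1)))"
  have der: "(f i has_field_derivative f (Suc i) x) (at x within S)" if "x \<in> S" "i \<le> 1" for i x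
  proof -
    have "i = 0 \<or> i = 1" using that by auto
    then show ?thesis
    proof
      assume "i = 0"
      have "((\<lambda>z. z powr (1-s)) has_field_derivative ((1-s) * x powr (1-s-1))) (at x)"
        using has_field_derivative_powr[OF Spos[OF that(1)]] .
      then have "((\<lambda>z. z powr (1-s) / (1-s)) has_field_derivative ((1-s) * x powr (1-s-1)) / (1-s)) (at x)"
        by (rule DERIV_cdivide)
      then show ?thesis using \<open>i=0\<close> s1 by (auto simp: f_def intro: has_field_derivative_at_within)
    next
      assume "i = 1"
      have "((\<lambda>z. z powr (-s)) has_field_derivative ((-s) * x powr (-s-1))) (at x)"
        using has_field_derivative_powr[OF Spos[OF that(1)]] .
      then show ?thesis using \<open>i=1\<close> by (auto simp: f_def intro: has_field_derivative_at_within)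
    qed
  qed
  have B: "cmod (f (Suc 1) x) \<le> cmod s * a powr (- Re s - 1)" if xS: "x \<in> S" for x
  proof -
    obtain r where r: "r \<in> {a..a+1}" "x = of_real r" using xS unfolding S_def by blast
    have "cmod (f (Suc 1) x) = cmod s * r powr (- Re s - 1)"
      using r a by (simp add: f_def norm_mult norm_powr_real_powr)
    also have "\<dots> \<le> cmod s * a powr (- Re s - 1)"
      apply (rule mult_left_mono)
      using r a sr by (auto intro!: powr_mono2')
    finally show ?thesis .
  qed
  have "cmod (f 0 (of_real (a+1)) - (\<Sum>i\<le>1. f i (of_real a) * (of_real (a+1) - of_real a) ^ i / fact i))
        \<le> cmod s * a powr (- Re s - 1) * cmod (of_real (a+1) - of_real a :: complex) ^ Suc 1 / fact 1"
    by (rule field_Taylor[OF cS der B]) (use a in \<open>auto simp: S_def image_iff intro!: bexI[of _ "a+1"]\<close>)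
  then show ?thesis by (simp add: f_def diff_diff_eq)
qed

lemma partial_approx:
  fixes \<sigma> t :: real
  assumes s0: "0 < \<sigma>" and s1: "\<sigma> < 1" and t: "\<bar>t\<bar> \<le> 1" and n: "n \<ge> 1"
  shows "cmod (zeta_partial n \<sigma> t - of_nat n powr (1 - Complex \<sigma> t) / (1 - Complex \<sigma> t))
     \<le> 1 + 1 / (1 - \<sigma>) + 2 * (\<Sum>k. real k powr (-\<sigma>-1))"
proof -
  define s where "s = Complex \<sigma> t"
  have sn1: "s \<noteq> 1" using s1 by (auto simp: s_def complex_eq_iff)
  have Res: "Re s = \<sigma>" by (simp add: s_def)
  have cs: "cmod s \<le> 2"
  proof -
    have "cmod s \<le> \<bar>Re s\<bar> + \<bar>Im s\<bar>" by (rule cmod_le)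
    then show ?thesis using s0 s1 t by (simp add: s_def)
  qed
  define F where "F = (\<lambda>x::real. (of_real x :: complex) powr (1-s) / (1-s))"
  define e where "e = (\<lambda>k::nat. F (real k + 1) - F (real k) - (of_real (real k)) powr (-s))"
  have e_bd: "cmod (e k) \<le> 2 * real k powr (-\<sigma>-1)" if "k \<ge> 1" for k
  proof -
    have "cmod (e k) \<le> cmod s * real k powr (- Re s - 1)"
      unfolding e_def F_def using taylor_step[of "real k" s] that sn1 s0 Res by simp
    also have "\<dots> \<le> 2 * real k powr (-\<sigma>-1)"
      unfolding Res using cs by (intro mult_right_mono) auto
    finally show ?thesis .
  qed
  have rep: "zeta_partial (Suc m) \<sigma> t - F (real (Suc m)) = of_real (real (Suc m)) powr (-s) - F 1 - (\<Sum>k\<in>{1..m}. e k)" for m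
  proof (induction m)
    case 0
    then show ?case by (simp add: zeta_partial_def s_def)
  next
    case (Suc m)
    have "zeta_partial (Suc (Suc m)) \<sigma> t = zeta_partial (Suc m) \<sigma> t + of_real (real (Suc (Suc m))) powr (-s)"
      by (simp add: zeta_partial_def s_def)
    then show ?case using Suc.IH by (simp add: e_def algebra_simps)
  qed
  obtain m where m: "n = Suc m" using n by (cases n) auto
  have F1: "F 1 = 1 / (1-s)" by (simp add: F_def)
  have c1s: "cmod (1 - s) \<ge> 1 - \<sigma>"
    using abs_Re_le_cmod[of "1-s"] Res by auto
  have nF1: "cmod (F 1) \<le> 1 / (1 - \<sigma>)"
    unfolding F1 using c1s s1 by (simp add: norm_divide frac_le)
  have np: "cmod (of_real (real (Suc m)) powr (-s)) \<le> 1"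
  proof -
    have "cmod (of_real (real (Suc m)) powr (-s)) = real (Suc m) powr (-\<sigma>)"
      by (subst norm_powr_real_powr) (auto simp: Res)
    also have "\<dots> \<le> 1" using s0 ge_one_powr_ge_zero[of "real (Suc m)" \<sigma>] by (simp add: powr_minus inverse_le_1_iff)
    finally show ?thesis .
  qed
  have summ: "summable (\<lambda>k. real k powr (-\<sigma>-1))"
    using s0 by (simp add: summable_real_powr_iff)
  have "cmod (\<Sum>k\<in>{1..m}. e k) \<le> (\<Sum>k\<in>{1..m}. 2 * real k powr (-\<sigma>-1))"
    by (rule sum_norm_le) (use e_bd in auto)
  also have "\<dots> = 2 * (\<Sum>k\<in>{1..m}. real k powr (-\<sigma>-1))" by (simp add: sum_distrib_left)
  also have "\<dots> \<le> 2 * (\<Sum>k. real k powr (-\<sigma>-1))"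
    using sum_le_suminf[OF summ, of "{1..m}"] by auto
  finally have se: "cmod (\<Sum>k\<in>{1..m}. e k) \<le> 2 * (\<Sum>k. real k powr (-\<sigma>-1))" .
  have "cmod (zeta_partial n \<sigma> t - F (real n)) \<le> 1 + 1 / (1 - \<sigma>) + 2 * (\<Sum>k. real k powr (-\<sigma>-1))"
  proof -
    have eq: "zeta_partial n \<sigma> t - F (real n) = of_real (real (Suc m)) powr (-s) - F 1 - (\<Sum>k\<in>{1..m}. e k)"
      using rep[of m] m by simp
    have "cmod (of_real (real (Suc m)) powr (-s) - F 1 - (\<Sum>k\<in>{1..m}. e k))
       \<le> cmod (of_real (real (Suc m)) powr (-s)) + cmod (F 1) + cmod (\<Sum>k\<in>{1..m}. e k)"
      by (meson add_mono norm_triangle_ineq4 order_trans order_refl)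
    then show ?thesis unfolding eq using np nF1 se by linarith
  qed
  then show ?thesis by (simp add: F_def s_def)
qed

lemma cont_zp: "continuous_on A (\<lambda>t. zeta_partial n \<sigma> t)"
  unfolding zeta_partial_def
proof (intro continuous_on_sum)
  fix k assume k: "k \<in> {1..n}"
  have c: "continuous_on A (\<lambda>t. Complex \<sigma> t)"
    unfolding Complex_eq by (intro continuous_intros)
  show "continuous_on A (\<lambda>t. of_nat k powr - Complex \<sigma> t)"
    using k by (intro continuous_intros c) auto
qed

lemma main_bound:
  fixes \<sigma> :: real and n :: nat
  assumes s0: "0 < \<sigma>" and s1: "\<sigma> < 1" and n: "n \<ge> 1"
  defines "\<alpha> \<equiv> 1 - \<sigma>"
  defines "C \<equiv> 1 + 1 / (1 - \<sigma>) + 2 * (\<Sum>k. real k powr (-\<sigma>-1))"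
  shows "\<bar>integral {0..1} (\<lambda>t. (cmod (zeta_partial n \<sigma> t))\<^sup>2) - real n powr (2*\<alpha>) * (1/\<alpha> * arctan (1/\<alpha>))\<bar>
     \<le> C * (2 * real n powr \<alpha> / \<alpha> + C)"
proof -
  have a0: "\<alpha> > 0" using s1 by (simp add: \<alpha>_def)
  have summ: "summable (\<lambda>k. real k powr (-\<sigma>-1))"
    using s0 by (simp add: summable_real_powr_iff)
  have C0: "C \<ge> 0" unfolding C_def using s1 suminf_nonneg[OF summ] by simp
  define M where "M = (\<lambda>t. of_nat n powr (1 - Complex \<sigma> t) / (1 - Complex \<sigma> t))"
  define P where "P = (\<lambda>t. zeta_partial n \<sigma> t)"
  have npos: "real n > 0" using n by simp
  have c1s: "cmod (1 - Complex \<sigma> t) ^ 2 = \<alpha>^2 + t^2" for t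
    by (simp add: cmod_power2 \<alpha>_def)
  have c1s': "cmod (1 - Complex \<sigma> t) \<ge> \<alpha>" for t
    using abs_Re_le_cmod[of "1 - Complex \<sigma> t"] a0 by (auto simp: \<alpha>_def)
  have nM: "cmod (of_nat n powr (1 - Complex \<sigma> t)) = real n powr \<alpha>" for t
  proof -
    have "cmod (of_real (real n) powr (1 - Complex \<sigma> t)) = real n powr \<alpha>"
      by (subst norm_powr_real_powr) (auto simp: \<alpha>_def)
    then show ?thesis by simp
  qed
  have M2: "cmod (M t) ^ 2 = real n powr (2*\<alpha>) / (\<alpha>^2 + t^2)" for t
  proof -
    have "cmod (M t) ^ 2 = (real n powr \<alpha>)^2 / cmod (1 - Complex \<sigma> t) ^ 2"
      by (simp add: M_def norm_divide nM power_divide)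
    also have "(real n powr \<alpha>)^2 = real n powr (2*\<alpha>)"
      by (simp add: power2_eq_square powr_add[symmetric])
    finally show ?thesis by (simp add: c1s)
  qed
  have Mb: "cmod (M t) \<le> real n powr \<alpha> / \<alpha>" for t
    unfolding M_def norm_divide nM using c1s'[of t] a0 by (intro divide_left_mono) (auto intro!: mult_pos_pos)
  have PM: "cmod (P t - M t) \<le> C" if "t \<in> {0..1}" for t
    unfolding P_def M_def C_def using partial_approx[of \<sigma> t n] s0 s1 n that by auto
  have pw: "norm (cmod (P t)^2 - cmod (M t)^2) \<le> C * (2 * real n powr \<alpha> / \<alpha> + C)" if "t \<in> {0..1}" for t
  proof -
    have d: "\<bar>cmod (P t) - cmod (M t)\<bar> \<le> C"
      using PM[OF that] norm_triangle_ineq3[of "P t" "M t"] by linarith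
    have s: "cmod (P t) + cmod (M t) \<le> 2 * real n powr \<alpha> / \<alpha> + C"
      using d Mb[of t] by linarith
    have "norm (cmod (P t)^2 - cmod (M t)^2) = \<bar>cmod (P t) - cmod (M t)\<bar> * (cmod (P t) + cmod (M t))"
    proof -
      have "cmod (P t)^2 - cmod (M t)^2 = (cmod (P t) - cmod (M t)) * (cmod (P t) + cmod (M t))"
        by (simp add: power2_eq_square algebra_simps)
      then show ?thesis by (simp only: real_norm_def abs_mult) simp
    qed
    also have "\<dots> \<le> C * (2 * real n powr \<alpha> / \<alpha> + C)"
      using d s by (intro mult_mono) auto
    finally show ?thesis .
  qed
  have Pint: "(\<lambda>t. cmod (P t)^2) integrable_on {0..1}"
    unfolding P_def by (intro integrable_continuous_interval continuous_intros cont_zp)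
  define G where "G = (\<lambda>t. real n powr (2*\<alpha>) * (arctan (t/\<alpha>) / \<alpha>))"
  have Gd: "(G has_vector_derivative (real n powr (2*\<alpha>) / (\<alpha>^2 + t^2))) (at t within {0..1})" for t
  proof -
    have "(G has_real_derivative (real n powr (2*\<alpha>) / (\<alpha>^2 + t^2))) (at t)"
    proof -
      have h1: "((\<lambda>x. x / \<alpha>) has_real_derivative 1 / \<alpha>) (at t)"
        by (rule DERIV_cdivide[OF DERIV_ident])
      have h2: "((\<lambda>x. arctan (x / \<alpha>)) has_real_derivative inverse (1 + (t/\<alpha>)^2) * (1/\<alpha>)) (at t)"
        by (rule DERIV_chain2[OF DERIV_arctan h1])
      have h3: "(G has_real_derivative real n powr (2*\<alpha>) * (inverse (1 + (t/\<alpha>)^2) * (1/\<alpha>) / \<alpha>)) (at t)"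
        unfolding G_def by (rule DERIV_cmult[OF DERIV_cdivide[OF h2]])
      have "real n powr (2*\<alpha>) * (inverse (1 + (t/\<alpha>)^2) * (1/\<alpha>) / \<alpha>) = real n powr (2*\<alpha>) / (\<alpha>^2 + t^2)"
      proof -
        have q: "\<alpha>*\<alpha> + t*t > 0" using a0 by (intro add_pos_nonneg) auto
        have q2: "1 + (t/\<alpha>)^2 > 0" by (intro add_pos_nonneg) auto
        have q3: "\<alpha> * (\<alpha>*\<alpha>) + \<alpha> * (t*t) \<noteq> 0"
          using mult_pos_pos[OF a0 q] by (simp add: algebra_simps)
        have "inverse (1 + (t/\<alpha>)^2) * (1/\<alpha>) / \<alpha> = 1 / (\<alpha>^2 + t^2)"
          using a0 q q2 q3 by (simp add: field_simps power2_eq_square)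
        then show ?thesis by simp
      qed
      with h3 show ?thesis by simp
    qed
    then show ?thesis
      by (simp add: has_real_derivative_iff_has_vector_derivative has_vector_derivative_at_within)
  qed
  have Mint: "((\<lambda>t. cmod (M t)^2) has_integral (real n powr (2*\<alpha>) * (1/\<alpha> * arctan (1/\<alpha>)))) {0..1}"
  proof -
    have "((\<lambda>t. real n powr (2*\<alpha>) / (\<alpha>^2 + t^2)) has_integral (G 1 - G 0)) {0..1}"
      by (rule fundamental_theorem_of_calculus) (use Gd in auto)
    moreover have "G 1 - G 0 = real n powr (2*\<alpha>) * (1/\<alpha> * arctan (1/\<alpha>))"
      by (simp add: G_def)
    ultimately show ?thesis by (simp add: M2)
  qed
  have dint: "((\<lambda>t. cmod (P t)^2 - cmod (M t)^2) has_integral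
      (integral {0..1} (\<lambda>t. cmod (P t)^2) - real n powr (2*\<alpha>) * (1/\<alpha> * arctan (1/\<alpha>)))) {0..1}"
    by (intro has_integral_diff Mint integrable_integral Pint)
  have "norm (integral {0..1} (\<lambda>t. cmod (P t)^2) - real n powr (2*\<alpha>) * (1/\<alpha> * arctan (1/\<alpha>)))
      \<le> C * (2 * real n powr \<alpha> / \<alpha> + C)"
    using has_integral_bound_real[OF _ _ dint, of "C * (2 * real n powr \<alpha> / \<alpha> + C)" "{}"] pw C0 a0
    by auto
  then show ?thesis by (simp add: P_def)
qed

theorem corollary5p6:
  fixes \<sigma> :: real
  assumes "1/2 < \<sigma>" and "\<sigma> < 1"
  shows "(\<lambda>n::nat. integral {0..1} (\<lambda>t. (cmod (zeta_partial n \<sigma> t))\<^sup>2) / real n powr (2 * (1 - \<sigma>))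
            - 1 / (1 - \<sigma>) * arctan (1 / (1 - \<sigma>)))
         \<in> O(\<lambda>n. 1 / real n powr (2 * (1 - \<sigma>) / 3))"
proof -
  define \<alpha> where "\<alpha> = 1 - \<sigma>"
  define C where "C = 1 + 1 / (1 - \<sigma>) + 2 * (\<Sum>k. real k powr (-\<sigma>-1))"
  have s0: "0 < \<sigma>" using assms by simp
  have a0: "\<alpha> > 0" using assms by (simp add: \<alpha>_def)
  have summ: "summable (\<lambda>k. real k powr (-\<sigma>-1))"
    using s0 by (simp add: summable_real_powr_iff)
  have C0: "C \<ge> 0" unfolding C_def using assms suminf_nonneg[OF summ] by simp
  define K where "K = 2 * C / \<alpha> + C^2"
  show ?thesis
  proof (rule bigoI[where c = K])
    show "\<forall>\<^sub>F n in at_top. norm (integral {0..1} (\<lambda>t. (cmod (zeta_partial n \<sigma> t))\<^sup>2) / real n powr (2 * (1 - \<sigma>))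
            - 1 / (1 - \<sigma>) * arctan (1 / (1 - \<sigma>))) \<le> K * norm (1 / real n powr (2 * (1 - \<sigma>) / 3))"
      using eventually_ge_at_top[of "1::nat"]
    proof eventually_elim
      case (elim n)
      define I where "I = integral {0..1} (\<lambda>t. (cmod (zeta_partial n \<sigma> t))\<^sup>2)"
      define A where "A = 1 / (1 - \<sigma>) * arctan (1 / (1 - \<sigma>))"
      define x where "x = real n powr \<alpha>"
      define y where "y = real n powr (2 * \<alpha> / 3)"
      have n1: "real n \<ge> 1" using elim by simp
      have x1: "x \<ge> 1" unfolding x_def using n1 a0 by (simp add: ge_one_powr_ge_zero)
      have y1: "y \<ge> 1" unfolding y_def using n1 a0 by (simp add: ge_one_powr_ge_zero)
      have yx: "y \<le> x" unfolding x_def y_def using n1 a0 by (intro powr_mono) auto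
      have x2: "real n powr (2 * (1 - \<sigma>)) = x^2"
        by (simp add: x_def \<alpha>_def power2_eq_square powr_add[symmetric])
      have x2': "real n powr (2 * \<alpha>) = x^2"
        by (simp add: x_def power2_eq_square powr_add[symmetric])
      have "\<bar>I - real n powr (2 * \<alpha>) * A\<bar> \<le> C * (2 * x / \<alpha> + C)"
        using main_bound[of \<sigma> n] s0 assms elim unfolding I_def A_def x_def C_def \<alpha>_def
        by simp
      then have mb: "\<bar>I - x^2 * A\<bar> \<le> C * (2 * x / \<alpha> + C)"
        by (simp only: x2')
      have "norm (I / x^2 - A) = \<bar>I - x^2 * A\<bar> / x^2"
        using x1 by (simp add: field_simps)
      also have "\<dots> \<le> C * (2 * x / \<alpha> + C) / x^2"
        using mb x1 by (intro divide_right_mono) auto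
      also have "\<dots> = (2 * C / \<alpha>) / x + C^2 / x^2"
        using x1 by (simp add: field_simps power2_eq_square)
      also have "\<dots> \<le> (2 * C / \<alpha>) / x + C^2 / x"
        using x1 C0 by (intro add_left_mono divide_left_mono) (auto simp: power2_eq_square intro: order_trans[of _ x] mult_right_mono)
      also have "\<dots> = K / x" by (simp add: K_def add_divide_distrib)
      also have "\<dots> \<le> K / y"
        using x1 y1 yx C0 a0 by (intro divide_left_mono) (auto simp: K_def)
      also have "\<dots> = K * norm (1 / y)" using y1 by simp
      finally have F: "norm (I / x^2 - A) \<le> K * norm (1 / y)" .
      show ?case unfolding x2 using F unfolding I_def A_def y_def \<alpha>_def .
    qed
  qed
qed

end
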